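(* Let $n<0$ and $p,m,N\geq1$ be integers with $\gcd(n,m)=1$. Let $a_1,\dots,a_N$ be pairwise distinct complex numbers, $\theta_1,\dots,\theta_N\in\mathbb{C}$, $c_j^\nu\in\mathbb{C}$ for $j=1,\dots,p-1$, $\nu=1,\dots,N$, and $\beta_k^{(i)}=\theta_i-\frac{(k-1)n}{m}$. For $J$ a multiple of $m$ with $J\geq m$, $\nu,i\in\{1,\dots,N\}$, set $$\rho_{\nu,i}^{(J)}=m\!\!\sum_{k_1+\dots+k_N=J|n|/m-1}\frac{(-1)^{k_\nu}}{(a_\nu-a_i)^{k_\nu+1}}\prod_{h=1,h\neq\nu}^N\frac{\binom{-J|n|/m}{k_h}}{(a_\nu-a_h)^{k_h+J|n|/m}}\quad(i\neq\nu),$$ $$\rho_{\nu,\nu}^{(J)}=m\!\!\sum_{\substack{(k_h)_{h\neq\nu}\\ \sum_{h\neq\nu}k_h=J|n|/m}}\ \prod_{h=1,h\neq\nu}^N\frac{\binom{-J|n|/m}{k_h}}{(a_\nu-a_h)^{k_h+J|n|/m}},$$ sums over nonnegative integers. Let $B^{(1)},\dots,B^{(N)}$ be the upper triangular $p\times p$ matrices with $B^{(i)}_{kk}=\beta_k^{(i)}$, $B^{(i)}_{kl}=0$ if $l<k$ or if $l>k$ and $(l-k)/m\notin\mathbb{Z}$, and $B^{(i)}_{kl}=\sum_{\nu=1}^N c^\nu_{l-k}\,\rho^{(l-k)}_{\nu,i}$ if $l>k$ and $(l-k)/m\in\mathbb{Z}$. For $j=1,\dots,p-1$ define $$S_j(z)=\frac{-m^2}{jn}\sum_{\nu=1}^N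 c_j^\nu\!\!\sum_{k_1+\dots+k_N=j|n|/m-1}\frac{(-1)^{k_\nu}}{(a_\nu-z)^{k_\nu+1}}\prod_{h=1,h\neq\nu}^N\frac{\binom{-j|n|/m}{k_h}}{(a_\nu-a_h)^{k_h+j|n|/m}}\ \text{ if } j/m\in\mathbb{Z},\qquad S_j(z)=0\ \text{ if } j/m\notin\mathbb{Z}.$$ Let $D=\mathrm{diag}\big(\prod_{i=1}^N(z-a_i)^{\beta_1^{(i)}},\dots,\prod_{i=1}^N(z-a_i)^{\beta_p^{(i)}}\big)$ and let $M$ be upper triangular with $M_{kk}=1$, $M_{kl}=0$ for $l<k$, and for $l>k$ $$M_{kl}=\sum_{q\vdash(l-k)}\prod_{j=1}^{l-k}\frac{S_j^{\sigma_q(j)}}{\sigma_q(j)!}.$$ Then $\Phi=MD$ solves the Fuchsian system $\frac{\mathrm{d}\Phi}{\mathrm{d}z}=\sum_{i=1}^N\frac{B^{(i)}}{z-a_i}\Phi$ on $\mathbb{C}\setminus\{a_1,\dots,a_N\}$.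
   Context: Generalized binomial coefficients: $\binom{\beta}{j}=\frac{\beta(\beta-1)\cdots(\beta-j+1)}{j!}$ for real $\beta$ and $j\in\mathbb{N}$, $\binom{\beta}{0}=1$. In the paper the quantities $\rho^{(J)}_{\nu,i}$ are the residues at the ramification point $(a_\nu,0)$ of the meromorphic differential $w^{Jn}\mathrm{d}\zeta/(\zeta-a_i)$ on the compact Riemann surface of $w^m=\prod_{i=1}^N(\zeta-a_i)$. $q\vdash(l-k)$ ranges over partitions of $l-k$, and $\sigma_q(j)$ is the number of parts of $q$ equal to $j$. Powers $(z-a_i)^\beta$ are understood via a chosen branch and analytic continuation. *)

theory Defs
  imports "HOL-Complex_Analysis.Complex_Analysis" "HOL-Library.Multiset"
begin

text \<open>Indices: points a 1 .. a N, matrices indexed by 1..p.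
  c j \<nu> stands for c_j^\<nu>.\<close>

definition comps :: "nat set \<Rightarrow> nat \<Rightarrow> (nat \<Rightarrow> nat) set" where
  "comps I K = {k. (\<forall>h. h \<notin> I \<longrightarrow> k h = 0) \<and> (\<Sum>h\<in>I. k h) = K}"

text \<open>Partitions of d, as multisets of positive parts; sigma_q(j) = count q j.\<close>
definition partitions :: "nat \<Rightarrow> nat multiset set" where
  "partitions d = {q. (\<forall>j\<in>#q. 0 < j) \<and> sum_mset q = d}"

definition Jnm :: "int \<Rightarrow> nat \<Rightarrow> nat \<Rightarrow> nat" where
  "Jnm n m J = (J * nat \<bar>n\<bar>) div m"

definition beta :: "int \<Rightarrow> nat \<Rightarrow> (nat \<Rightarrow> complex) \<Rightarrow> nat \<Rightarrow> nat \<Rightarrow> complex" where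
  "beta n m \<theta> i k = \<theta> i - of_nat (k - 1) * of_int n / of_nat m"

definition prodfac :: "int \<Rightarrow> nat \<Rightarrow> nat \<Rightarrow> (nat \<Rightarrow> complex) \<Rightarrow> nat \<Rightarrow> nat \<Rightarrow> (nat \<Rightarrow> nat) \<Rightarrow> complex" where
  "prodfac n m N a J \<nu> k =
     (\<Prod>h\<in>{1..N} - {\<nu>}. ((- of_nat (Jnm n m J)) gchoose (k h))
        / (a \<nu> - a h) ^ (k h + Jnm n m J))"

definition rho :: "int \<Rightarrow> nat \<Rightarrow> nat \<Rightarrow> (nat \<Rightarrow> complex) \<Rightarrow> nat \<Rightarrow> nat \<Rightarrow> nat \<Rightarrow> complex" where
  "rho n m N a J \<nu> i =
     (if i \<noteq> \<nu> then
        of_nat m * (\<Sum>k\<in>comps {1..N} (Jnm n m J - 1).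
           (-1) ^ (k \<nu>) / (a \<nu> - a i) ^ (k \<nu> + 1) * prodfac n m N a J \<nu> k)
      else
        of_nat m * (\<Sum>k\<in>comps ({1..N} - {\<nu>}) (Jnm n m J). prodfac n m N a J \<nu> k))"

definition Bmat :: "int \<Rightarrow> nat \<Rightarrow> nat \<Rightarrow> (nat \<Rightarrow> complex) \<Rightarrow> (nat \<Rightarrow> complex)
    \<Rightarrow> (nat \<Rightarrow> nat \<Rightarrow> complex) \<Rightarrow> nat \<Rightarrow> nat \<Rightarrow> nat \<Rightarrow> complex" where
  "Bmat n m N a \<theta> c i k l =
     (if k = l then beta n m \<theta> i k
      else if k < l \<and> m dvd (l - k) then
        (\<Sum>\<nu>=1..N. c (l - k) \<nu> * rho n m N a (l - k) \<nu> i)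
      else 0)"

definition Sfun :: "int \<Rightarrow> nat \<Rightarrow> nat \<Rightarrow> (nat \<Rightarrow> complex) \<Rightarrow> (nat \<Rightarrow> nat \<Rightarrow> complex)
    \<Rightarrow> nat \<Rightarrow> complex \<Rightarrow> complex" where
  "Sfun n m N a c j z =
     (if m dvd j then
        - (of_nat m ^ 2) / (of_nat j * of_int n) *
        (\<Sum>\<nu>=1..N. c j \<nu> *
          (\<Sum>k\<in>comps {1..N} (Jnm n m j - 1).
             (-1) ^ (k \<nu>) / (a \<nu> - z) ^ (k \<nu> + 1) * prodfac n m N a j \<nu> k))
      else 0)"

definition Mmat :: "int \<Rightarrow> nat \<Rightarrow> nat \<Rightarrow> (nat \<Rightarrow> complex) \<Rightarrow> (nat \<Rightarrow> nat \<Rightarrow> complex)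
    \<Rightarrow> nat \<Rightarrow> nat \<Rightarrow> complex \<Rightarrow> complex" where
  "Mmat n m N a c k l z =
     (if k = l then 1
      else if k < l then
        (\<Sum>q\<in>partitions (l - k).
           \<Prod>j=1..l - k. Sfun n m N a c j z ^ count q j / fact (count q j))
      else 0)"

text \<open>Diagonal matrix D, with (z - a_i)^beta := exp (beta * L i z) for a chosen
  branch L i of log (z - a_i).\<close>
definition Dmat :: "int \<Rightarrow> nat \<Rightarrow> nat \<Rightarrow> (nat \<Rightarrow> complex) \<Rightarrow> (nat \<Rightarrow> complex \<Rightarrow> complex)
    \<Rightarrow> nat \<Rightarrow> nat \<Rightarrow> complex \<Rightarrow> complex" where
  "Dmat n m N \<theta> L k l z =
     (if k = l then (\<Prod>i=1..N. exp (beta n m \<theta> i k * L i z)) else 0)"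

definition Phi :: "int \<Rightarrow> nat \<Rightarrow> nat \<Rightarrow> nat \<Rightarrow> (nat \<Rightarrow> complex) \<Rightarrow> (nat \<Rightarrow> complex)
    \<Rightarrow> (nat \<Rightarrow> nat \<Rightarrow> complex) \<Rightarrow> (nat \<Rightarrow> complex \<Rightarrow> complex) \<Rightarrow> nat \<Rightarrow> nat \<Rightarrow> complex \<Rightarrow> complex" where
  "Phi n p m N a \<theta> c L k l z =
     (\<Sum>r=1..p. Mmat n m N a c k r z * Dmat n m N \<theta> L r l z)"

end

theory Submission
  imports Defs "HOL-Computational_Algebra.Formal_Power_Series"
begin


lemma comps_empty: "comps {} r = (if r = 0 then {\<lambda>_. 0} else {})"
  unfolding comps_def by auto

lemma comps_insert:
  assumes "finite I" "x \<notin> I"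
  shows "comps (insert x I) r = (\<lambda>(b,k). k(x:=b)) ` (SIGMA b:{..r}. comps I (r - b))"
proof (rule set_eqI, rule iffI)
  fix k assume k: "k \<in> comps (insert x I) r"
  have s: "k x + (\<Sum>h\<in>I. k h) = r" using k assms unfolding comps_def by (simp add: sum.insert)
  have "(k x, k(x:=0)) \<in> (SIGMA b:{..r}. comps I (r - b))"
  proof -
    have "\<forall>h. h \<notin> I \<longrightarrow> (k(x:=0)) h = 0" using k unfolding comps_def by auto
    moreover have "(\<Sum>h\<in>I. (k(x:=0)) h) = r - k x"
      using s assms by (subst sum.cong[OF refl, of _ _ k]) auto
    moreover have "k x \<le> r" using s by auto
    ultimately show ?thesis unfolding comps_def by auto
  qed
  moreover have "k = (\<lambda>(b,k). k(x:=b)) (k x, k(x:=0))" by auto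
  ultimately show "k \<in> (\<lambda>(b,k). k(x:=b)) ` (SIGMA b:{..r}. comps I (r - b))" by blast
next
  fix k assume "k \<in> (\<lambda>(b,k). k(x:=b)) ` (SIGMA b:{..r}. comps I (r - b))"
  then obtain b k' where b: "b \<le> r" and k': "k' \<in> comps I (r - b)" and kk: "k = k'(x:=b)" by auto
  have "(\<Sum>h\<in>I. k h) = (\<Sum>h\<in>I. k' h)" using assms kk by (auto intro!: sum.cong)
  then show "k \<in> comps (insert x I) r" using b k' kk assms unfolding comps_def by (auto simp: sum.insert)
qed

lemma finite_comps: "finite I \<Longrightarrow> finite (comps I r)"
proof (induction I arbitrary: r rule: finite_induct)
  case empty then show ?case by (simp add: comps_empty)
next
  case (insert x I) then show ?case by (simp add: comps_insert)
qed

lemma sum_comps_insert: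
  assumes "finite I" "x \<notin> I"
  shows "(\<Sum>k\<in>comps (insert x I) r. H k) = (\<Sum>b\<le>r. \<Sum>k\<in>comps I (r - b). H (k(x:=b)))"
proof -
  have inj: "inj_on (\<lambda>(b,k). k(x:=b)) (SIGMA b:{..r}. comps I (r - b))"
  proof (rule inj_onI, clarsimp)
    fix b k b' k' assume "k \<in> comps I (r - b)" "k' \<in> comps I (r - b')" "k(x := b) = k'(x := b')"
    then have "b = b'" by (metis fun_upd_same)
    moreover have "k x = 0" "k' x = 0" using \<open>k \<in> _\<close> \<open>k' \<in> _\<close> assms unfolding comps_def by auto
    moreover have "k = k'"
    proof
      fix h show "k h = k' h"
        using \<open>k(x := b) = k'(x := b')\<close> \<open>k x = 0\<close> \<open>k' x = 0\<close>
        by (cases "h = x") (auto dest: fun_cong[where x=h])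
    qed
    ultimately show "b = b' \<and> k = k'" by simp
  qed
  have "(\<Sum>k\<in>comps (insert x I) r. H k) = (\<Sum>p\<in>(SIGMA b:{..r}. comps I (r - b)). H ((\<lambda>(b,k). k(x:=b)) p))"
    unfolding comps_insert[OF assms] by (rule sum.reindex[OF inj, unfolded comp_def])
  also have "\<dots> = (\<Sum>b\<le>r. \<Sum>k\<in>comps I (r - b). H (k(x:=b)))"
    using assms by (subst sum.Sigma) (auto simp: finite_comps split_def)
  finally show ?thesis .
qed


lemma fps_nth_prod_comps:
  fixes E :: "nat \<Rightarrow> 'a::comm_ring_1 fps"
  assumes "finite I"
  shows "(\<Prod>h\<in>I. E h) $ r = (\<Sum>k\<in>comps I r. \<Prod>h\<in>I. E h $ (k h))"
  using assms
proof (induction I arbitrary: r rule: finite_induct)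
  case empty then show ?case by (simp add: comps_empty)
next
  case (insert x I)
  have "(\<Prod>h\<in>insert x I. E h) $ r = (\<Sum>i=0..r. E x $ i * (\<Prod>h\<in>I. E h) $ (r - i))"
    using insert by (simp add: fps_mult_nth)
  also have "\<dots> = (\<Sum>b\<le>r. \<Sum>k\<in>comps I (r - b). E x $ b * (\<Prod>h\<in>I. E h $ (k h)))"
    by (simp add: insert.IH atLeast0AtMost sum_distrib_left)
  also have "\<dots> = (\<Sum>b\<le>r. \<Sum>k\<in>comps I (r - b). \<Prod>h\<in>insert x I. E h $ ((k(x:=b)) h))"
  proof (intro sum.cong refl)
    fix b k
    have "(\<Prod>h\<in>I. E h $ ((k(x:=b)) h)) = (\<Prod>h\<in>I. E h $ (k h))"
      using insert by (intro prod.cong) auto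
    then show "E x $ b * (\<Prod>h\<in>I. E h $ (k h)) = (\<Prod>h\<in>insert x I. E h $ ((k(x:=b)) h))"
      using insert by simp
  qed
  also have "\<dots> = (\<Sum>k\<in>comps (insert x I) r. \<Prod>h\<in>insert x I. E h $ (k h))"
    using insert by (simp add: sum_comps_insert)
  finally show ?case .
qed

definition LD :: "complex fps \<Rightarrow> complex fps \<Rightarrow> nat \<Rightarrow> bool" where
  "LD F P K \<longleftrightarrow> fps_X * fps_deriv F = of_nat K * P * F"

lemma LD_mult: "LD F P K \<Longrightarrow> LD G Q K \<Longrightarrow> LD (F * G) (P + Q) K"
  unfolding LD_def by (simp add: algebra_simps)

lemma LD_prod:
  assumes "finite I" "\<And>h. h \<in> I \<Longrightarrow> LD (F h) (P h) K"
  shows "LD (\<Prod>h\<in>I. F h) (\<Sum>h\<in>I. P h) K"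
  using assms
proof (induction I rule: finite_induct)
  case empty then show ?case by (simp add: LD_def)
next
  case (insert x I)
  then have "LD (F x * (\<Prod>h\<in>I. F h)) (P x + (\<Sum>h\<in>I. P h)) K" by (intro LD_mult) auto
  then show ?case using insert by simp
qed

definition ecoef :: "nat \<Rightarrow> complex \<Rightarrow> nat \<Rightarrow> complex" where
  "ecoef K d b = ((- of_nat K) gchoose b) / d ^ (b + K)"

definition pfps :: "complex \<Rightarrow> complex fps" where
  "pfps t = Abs_fps (\<lambda>j. if j = 0 then 0 else t ^ j)"

lemma ecoef_rec:
  assumes "d \<noteq> 0"
  shows "of_nat (Suc b) * ecoef K d (Suc b) = (of_nat K + of_nat b) * (- 1 / d) * ecoef K d b"
proof -
  have g: "of_nat (Suc b) * ((- of_nat K :: complex) gchoose Suc b) = (- of_nat K - of_nat b) * ((- of_nat K) gchoose b)"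
    using gbinomial_mult_1[of "- of_nat K :: complex" b] by (simp add: algebra_simps)
  have "of_nat (Suc b) * ecoef K d (Suc b) = (of_nat (Suc b) * ((- of_nat K :: complex) gchoose Suc b)) / (d * d ^ (b + K))"
    unfolding ecoef_def by simp
  also have "\<dots> = (of_nat K + of_nat b) * (- 1 / d) * (((- of_nat K) gchoose b) / d ^ (b + K))"
    unfolding g using assms by (simp add: field_simps)
  finally show ?thesis unfolding ecoef_def .
qed

lemma LD_single:
  assumes "d \<noteq> 0"
  shows "LD (Abs_fps (ecoef K d)) (pfps (- 1 / d)) K"
proof -
  define t where "t = - 1 / d"
  define e where "e = ecoef K d"
  have main: "of_nat r * e r = of_nat K * (\<Sum>i=0..r. pfps t $ i * e (r - i))" for r
  proof (induction r)
    case 0 then show ?case by (simp add: pfps_def)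
  next
    case (Suc r)
    have "of_nat (Suc r) * e (Suc r) = (of_nat K + of_nat r) * t * e r"
      using ecoef_rec[OF assms] unfolding e_def t_def by simp
    also have "\<dots> = t * (of_nat K * e r + of_nat r * e r)" by (simp add: algebra_simps)
    also have "\<dots> = t * (of_nat K * e r + of_nat K * (\<Sum>i=0..r. pfps t $ i * e (r - i)))"
      using Suc by simp
    also have "\<dots> = of_nat K * (t * (e r + (\<Sum>i=0..r. pfps t $ i * e (r - i))))"
      by (simp add: algebra_simps)
    also have "e r + (\<Sum>i=0..r. pfps t $ i * e (r - i)) = (\<Sum>i=0..r. t ^ i * e (r - i))"
    proof (cases r)
      case 0 then show ?thesis by (simp add: pfps_def)
    next
      case (Suc r')
      have "(\<Sum>i=0..r. t ^ i * e (r - i)) = e r + (\<Sum>i=0..r'. t ^ Suc i * e (r - Suc i))"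
        unfolding Suc by (subst sum.atLeast0_atMost_Suc_shift) simp
      also have "(\<Sum>i=0..r'. t ^ Suc i * e (r - Suc i)) = (\<Sum>i=0..r. pfps t $ i * e (r - i))"
        unfolding Suc by (simp only: sum.atLeast0_atMost_Suc_shift[of "\<lambda>i. pfps t $ i * e (Suc r' - i)"]) (simp add: pfps_def)
      finally show ?thesis by simp
    qed
    also have "t * (\<Sum>i=0..r. t ^ i * e (r - i)) = (\<Sum>i=0..Suc r. pfps t $ i * e (Suc r - i))"
      by (subst sum.atLeast0_atMost_Suc_shift) (simp add: pfps_def sum_distrib_left algebra_simps)
    finally show ?case .
  qed
  show ?thesis unfolding LD_def
  proof (rule fps_ext)
    fix r
    show "(fps_X * fps_deriv (Abs_fps (ecoef K d))) $ r = (of_nat K * pfps (- 1 / d) * Abs_fps (ecoef K d)) $ r"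
    proof -
      have "(fps_X * fps_deriv (Abs_fps (ecoef K d))) $ r = of_nat r * e r"
        unfolding e_def by (cases r) (simp_all del: of_nat_Suc add: mult.commute)
      also have "\<dots> = of_nat K * (pfps t * Abs_fps (ecoef K d)) $ r"
        using main[of r] unfolding fps_mult_nth e_def by simp
      also have "\<dots> = (of_nat K * pfps (- 1 / d) * Abs_fps (ecoef K d)) $ r"
        unfolding t_def by (simp add: mult.assoc flip: fps_of_nat)
      finally show ?thesis .
    qed
  qed
qed


lemma newton_q:
  fixes d :: "nat \<Rightarrow> complex" and K :: nat
  assumes "finite I" "\<And>h. h \<in> I \<Longrightarrow> d h \<noteq> 0"
  defines "q \<equiv> \<lambda>s. \<Sum>k\<in>comps I s. \<Prod>h\<in>I. ecoef K (d h) (k h)"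
  defines "pp \<equiv> \<lambda>j. \<Sum>h\<in>I. (- 1 / d h) ^ j"
  shows "of_nat r * q r = of_nat K * (\<Sum>j=1..r. pp j * q (r - j))"
proof -
  define F where "F = (\<Prod>h\<in>I. Abs_fps (ecoef K (d h)))"
  define P where "P = (\<Sum>h\<in>I. pfps (- 1 / d h))"
  have LDF: "LD F P K" unfolding F_def P_def using assms by (intro LD_prod LD_single) auto
  have qF: "q s = F $ s" for s unfolding q_def F_def using assms by (simp add: fps_nth_prod_comps)
  have Pn: "P $ i = (if i = 0 then 0 else pp i)" for i
    unfolding P_def pp_def by (simp add: fps_sum_nth pfps_def)
  have "of_nat r * q r = (fps_X * fps_deriv F) $ r"
    unfolding qF by (cases r) (simp_all del: of_nat_Suc add: mult.commute)
  also have "\<dots> = (of_nat K * P * F) $ r" using LDF unfolding LD_def by simp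
  also have "\<dots> = of_nat K * (P * F) $ r"
    by (simp add: mult.assoc flip: fps_of_nat)
  also have "\<dots> = of_nat K * (\<Sum>i=0..r. P $ i * F $ (r - i))"
    by (simp only: fps_mult_nth)
  also have "(\<Sum>i=0..r. P $ i * F $ (r - i)) = (\<Sum>i=1..r. pp i * q (r - i))"
  proof -
    have "(\<Sum>i=0..r. P $ i * F $ (r - i)) = (\<Sum>i=1..r. P $ i * F $ (r - i))"
      by (rule sum.mono_neutral_right) (auto simp: Pn)
    then show ?thesis by (simp add: Pn qF)
  qed
  finally show ?thesis .
qed



lemma tri_reindex:
  fixes K :: nat and f :: "nat \<Rightarrow> nat \<Rightarrow> 'a::comm_monoid_add"
  shows
  "(\<Sum>r\<le>K. \<Sum>j=1..r. f (r - j) (j - 1)) = (\<Sum>s<K. \<Sum>i<K - s. f s i)"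
proof (induction K)
  case 0 then show ?case by simp
next
  case (Suc K)
  have a: "(\<Sum>j=1..Suc K. f (Suc K - j) (j - 1)) = (\<Sum>i\<le>K. f (K - i) i)"
  proof -
    have "(\<Sum>j=1..Suc K. f (Suc K - j) (j - 1)) = (\<Sum>i=0..K. f (Suc K - Suc i) i)"
      using sum.shift_bounds_cl_Suc_ivl[of "\<lambda>j. f (Suc K - j) (j - 1)" 0 K] by simp
    then show ?thesis by (simp add: atLeast0AtMost)
  qed
  have b: "(\<Sum>i\<le>K. f (K - i) i) = (\<Sum>s\<le>K. f s (K - s))"
    by (rule sum.reindex_bij_witness[of _ "\<lambda>s. K - s" "\<lambda>i. K - i"]) auto
  have c: "(\<Sum>s<Suc K. \<Sum>i<Suc K - s. f s i) = (\<Sum>s<K. \<Sum>i<K - s. f s i) + (\<Sum>s\<le>K. f s (K - s))"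
  proof -
    have "(\<Sum>s<Suc K. \<Sum>i<Suc K - s. f s i) = (\<Sum>s<Suc K. (\<Sum>i<K - s. f s i) + f s (K - s))"
      by (intro sum.cong refl) (simp add: Suc_diff_le)
    also have "\<dots> = (\<Sum>s<Suc K. \<Sum>i<K - s. f s i) + (\<Sum>s<Suc K. f s (K - s))"
      by (simp add: sum.distrib)
    also have "(\<Sum>s<Suc K. \<Sum>i<K - s. f s i) = (\<Sum>s<K. \<Sum>i<K - s. f s i)" by simp
    finally show ?thesis by (simp add: lessThan_Suc_atMost)
  qed
  show ?case using Suc a b c by simp
qed


lemma main_alg:
  fixes q pp t y :: "nat \<Rightarrow> complex" and w :: complex and K :: nat and I :: "nat set"
  assumes fin: "finite I"
    and newton: "\<And>r. of_nat r * q r = of_nat K * (\<Sum>j=1..r. pp j * q (r - j))"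
    and ppdef: "\<And>j. pp j = (\<Sum>h\<in>I. t h ^ j)"
    and y: "\<And>h. h \<in> I \<Longrightarrow> y h * (t h - w) = t h * w"
  defines "g \<equiv> \<lambda>x. - (\<Sum>s<K. q s * x ^ (K - s))"
  shows "- (\<Sum>r\<le>K. of_nat r * q r * w ^ (K - r + 1)) = of_nat K * (\<Sum>h\<in>I. y h * (g (t h) - g w))"
proof -
  have h1: "y h * (g (t h) - g w) = - (\<Sum>s<K. \<Sum>i<K - s. q s * t h ^ (i + 1) * w ^ (K - s - i))"
    if h: "h \<in> I" for h
  proof -
    have "g (t h) - g w = - (\<Sum>s<K. q s * (t h ^ (K - s) - w ^ (K - s)))"
      unfolding g_def by (simp add: sum_subtractf algebra_simps)
    also have "\<dots> = - (\<Sum>s<K. q s * ((t h - w) * (\<Sum>i<K - s. w ^ (K - s - Suc i) * t h ^ i)))"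
      by (simp add: power_diff_sumr2)
    finally have "y h * (g (t h) - g w) = y h * - (\<Sum>s<K. q s * ((t h - w) * (\<Sum>i<K - s. w ^ (K - s - Suc i) * t h ^ i)))"
      by simp
    also have "\<dots> = - (\<Sum>s<K. q s * ((y h * (t h - w)) * (\<Sum>i<K - s. w ^ (K - s - Suc i) * t h ^ i)))"
      by (simp add: sum_distrib_left mult_ac)
    also have "\<dots> = - (\<Sum>s<K. q s * ((t h * w) * (\<Sum>i<K - s. w ^ (K - s - Suc i) * t h ^ i)))"
      using y[OF h] by simp
    also have "\<dots> = - (\<Sum>s<K. \<Sum>i<K - s. q s * t h ^ (i + 1) * w ^ (K - s - i))"
    proof -
      have "q s * ((t h * w) * (w ^ (K - s - Suc i) * t h ^ i)) = q s * t h ^ (i + 1) * w ^ (K - s - i)"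
        if "i < K - s" for s i
      proof -
        have "K - s - i = Suc (K - s - Suc i)" using that by simp
        then show ?thesis by (simp add: algebra_simps)
      qed
      note inner = this
      have "q s * ((t h * w) * (\<Sum>i<K - s. w ^ (K - s - Suc i) * t h ^ i))
          = (\<Sum>i<K - s. q s * t h ^ (i + 1) * w ^ (K - s - i))" for s
        unfolding sum_distrib_left by (intro sum.cong refl inner) simp
      then show ?thesis by simp
    qed
    finally show ?thesis .
  qed
  have "of_nat K * (\<Sum>h\<in>I. y h * (g (t h) - g w))
      = - (of_nat K * (\<Sum>s<K. \<Sum>i<K - s. pp (i + 1) * q s * w ^ (K - s - i)))"
  proof -
    have "(\<Sum>h\<in>I. y h * (g (t h) - g w)) = - (\<Sum>h\<in>I. \<Sum>s<K. \<Sum>i<K - s. q s * t h ^ (i + 1) * w ^ (K - s - i))"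
      using h1 by (simp add: sum_negf)
    also have "(\<Sum>h\<in>I. \<Sum>s<K. \<Sum>i<K - s. q s * t h ^ (i + 1) * w ^ (K - s - i))
        = (\<Sum>s<K. \<Sum>h\<in>I. \<Sum>i<K - s. q s * t h ^ (i + 1) * w ^ (K - s - i))"
      by (rule sum.swap)
    also have "\<dots> = (\<Sum>s<K. \<Sum>i<K - s. \<Sum>h\<in>I. q s * t h ^ (i + 1) * w ^ (K - s - i))"
      by (intro sum.cong refl sum.swap)
    also have "\<dots> = (\<Sum>s<K. \<Sum>i<K - s. pp (i + 1) * q s * w ^ (K - s - i))"
      by (simp add: ppdef sum_distrib_right sum_distrib_left mult_ac)
    finally show ?thesis by simp
  qed
  also have "(\<Sum>s<K. \<Sum>i<K - s. pp (i + 1) * q s * w ^ (K - s - i))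
      = (\<Sum>r\<le>K. \<Sum>j=1..r. pp j * q (r - j) * w ^ (K - r + 1))"
  proof -
    have "(\<Sum>r\<le>K. \<Sum>j=1..r. pp j * q (r - j) * w ^ (K - r + 1))
        = (\<Sum>r\<le>K. \<Sum>j=1..r. (\<lambda>s i. pp (i + 1) * q s * w ^ (K - s - i)) (r - j) (j - 1))"
      by (intro sum.cong refl) (auto simp: Suc_diff_le)
    then show ?thesis using tri_reindex[where K=K and f="\<lambda>s i. pp (i + 1) * q s * w ^ (K - s - i)"] by simp
  qed
  also have "of_nat K * (\<Sum>r\<le>K. \<Sum>j=1..r. pp j * q (r - j) * w ^ (K - r + 1))
      = (\<Sum>r\<le>K. of_nat r * q r * w ^ (K - r + 1))"
    by (simp add: newton sum_distrib_left sum_distrib_right algebra_simps)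
  finally show ?thesis by simp
qed



lemma G_closed:
  fixes a :: "nat \<Rightarrow> complex" and K N \<nu> :: nat
  assumes nu: "\<nu> \<in> {1..N}" and K: "K \<ge> 1"
  defines "I' \<equiv> {1..N} - {\<nu>}"
  defines "pf \<equiv> \<lambda>k. \<Prod>h\<in>I'. ecoef K (a \<nu> - a h) (k h)"
  defines "q \<equiv> \<lambda>s. \<Sum>k\<in>comps I' s. pf k"
  shows "(\<Sum>k\<in>comps {1..N} (K - 1). (-1) ^ (k \<nu>) / (a \<nu> - w) ^ (k \<nu> + 1) * pf k)
       = - (\<Sum>s<K. q s * (1 / (w - a \<nu>)) ^ (K - s))"
proof -
  have ins: "{1..N} = insert \<nu> I'" and fin: "finite I'" and nI: "\<nu> \<notin> I'" using nu unfolding I'_def by auto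
  have pfu: "pf (k(\<nu>:=b)) = pf k" for k b unfolding pf_def using nI by (intro prod.cong) auto
  have aux: "c \<noteq> 0 \<Longrightarrow> c / (c * - X) = - (1 / X)" for c X :: complex
    by (cases "X = 0") (simp_all add: field_simps)
  have sgn: "(-1) ^ b / (a \<nu> - w) ^ (b + 1) = - ((1 / (w - a \<nu>)) ^ (b + 1))" for b
  proof -
    have "(a \<nu> - w) ^ (b + 1) = (-1) ^ (b + 1) * (w - a \<nu>) ^ (b + 1)"
    proof -
      have "a \<nu> - w = (-1) * (w - a \<nu>)" by simp
      then show ?thesis by (metis power_mult_distrib)
    qed
    then have "(-1) ^ b / (a \<nu> - w) ^ (b + 1) = (-1) ^ b / ((-1) ^ b * (- ((w - a \<nu>) ^ (b + 1))))"
      by simp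
    also have "\<dots> = - (1 / (w - a \<nu>) ^ (b + 1))"
      using aux[of "(-1) ^ b" "(w - a \<nu>) ^ (b + 1)"] by simp
    finally show ?thesis by (simp add: power_one_over)
  qed
  have "(\<Sum>k\<in>comps {1..N} (K - 1). (-1) ^ (k \<nu>) / (a \<nu> - w) ^ (k \<nu> + 1) * pf k)
      = (\<Sum>b\<le>K - 1. \<Sum>k\<in>comps I' (K - 1 - b). (-1) ^ b / (a \<nu> - w) ^ (b + 1) * pf k)"
    unfolding ins using fin nI by (simp add: sum_comps_insert pfu)
  also have "\<dots> = (\<Sum>b\<le>K - 1. - ((1 / (w - a \<nu>)) ^ (b + 1) * q (K - 1 - b)))"
    unfolding q_def sgn by (simp add: sum_distrib_left sum_negf)
  also have "\<dots> = (\<Sum>s<K. - (q s * (1 / (w - a \<nu>)) ^ (K - s)))"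
    using K by (intro sum.reindex_bij_witness[of _ "\<lambda>s. K - 1 - s" "\<lambda>b. K - 1 - b"]) (auto simp: Suc_diff_le)
  finally show ?thesis by (simp add: sum_negf)
qed


lemma deriv_pow_inv:
  fixes c z :: complex
  assumes "z \<noteq> c"
  shows "((\<lambda>w. (1 / (w - c)) ^ e) has_field_derivative (- of_nat e * (1 / (z - c)) ^ (e + 1))) (at z)"
proof -
  have d1: "((\<lambda>w. 1 / (w - c)) has_field_derivative (- ((1 / (z - c)) ^ 2))) (at z)"
    using assms by (auto intro!: derivative_eq_intros simp: power2_eq_square field_simps)
  have "((\<lambda>w. (1 / (w - c)) ^ e) has_field_derivative of_nat e * (- ((1 / (z - c)) ^ 2) * (1 / (z - c)) ^ (e - Suc 0))) (at z)"
    by (rule DERIV_power[OF d1])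
  moreover have "of_nat e * (- ((1 / (z - c)) ^ 2) * (1 / (z - c)) ^ (e - Suc 0)) = - of_nat e * (1 / (z - c)) ^ (e + 1)"
  proof (cases e)
    case 0 then show ?thesis by simp
  next
    case (Suc e')
    have "of_nat (Suc e') * (- (x ^ 2) * x ^ (Suc e' - Suc 0)) = - of_nat (Suc e') * x ^ (Suc e' + 1)" for x :: complex
      by (simp add: power2_eq_square algebra_simps)
    then show ?thesis using Suc by blast
  qed
  ultimately show ?thesis by simp
qed

lemma G_deriv:
  fixes c z :: complex and q :: "nat \<Rightarrow> complex"
  assumes "z \<noteq> c"
  shows "((\<lambda>w. - (\<Sum>s<K. q s * (1 / (w - c)) ^ (K - s))) has_field_derivative
           (\<Sum>s<K. of_nat (K - s) * q s * (1 / (z - c)) ^ (K - s + 1))) (at z)"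
proof -
  have "((\<lambda>w. - (\<Sum>s<K. q s * (1 / (w - c)) ^ (K - s))) has_field_derivative
           - (\<Sum>s<K. q s * (- of_nat (K - s) * (1 / (z - c)) ^ (K - s + 1)))) (at z)"
    by (intro DERIV_minus DERIV_sum DERIV_cmult deriv_pow_inv assms)
  moreover have "- (\<Sum>s<K. q s * (- of_nat (K - s) * (1 / (z - c)) ^ (K - s + 1)))
      = (\<Sum>s<K. of_nat (K - s) * q s * (1 / (z - c)) ^ (K - s + 1))"
  proof -
    have aux: "- (Q * (- of_nat n * y)) = of_nat n * Q * y" for Q y :: complex and n :: nat by simp
    show ?thesis by (subst sum_negf[symmetric]) (intro sum.cong refl aux)
  qed
  ultimately show ?thesis by simp
qed


lemma G_ident:
  fixes a :: "nat \<Rightarrow> complex" and K N \<nu> :: nat and z :: complex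
  assumes nu: "\<nu> \<in> {1..N}" and K: "K \<ge> 1" and inj: "inj_on a {1..N}"
    and z: "\<forall>i\<in>{1..N}. z \<noteq> a i"
  defines "I' \<equiv> {1..N} - {\<nu>}"
  defines "pf \<equiv> \<lambda>k. \<Prod>h\<in>I'. ecoef K (a \<nu> - a h) (k h)"
  defines "q \<equiv> \<lambda>s. \<Sum>k\<in>comps I' s. pf k"
  defines "Gc \<equiv> \<lambda>w. - (\<Sum>s<K. q s * (1 / (w - a \<nu>)) ^ (K - s))"
  defines "Gd \<equiv> \<Sum>s<K. of_nat (K - s) * q s * (1 / (z - a \<nu>)) ^ (K - s + 1)"
  shows "Gd + of_nat K * (\<Sum>i\<in>{1..N}. 1 / (z - a i)) * Gc z
       = of_nat K * ((\<Sum>h\<in>I'. Gc (a h) / (z - a h)) + q K / (z - a \<nu>))"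
proof -
  have ins: "{1..N} = insert \<nu> I'" and fin: "finite I'" and nI: "\<nu> \<notin> I'" using nu unfolding I'_def by auto
  have ahnu: "a h \<noteq> a \<nu>" if "h \<in> I'" for h
    using that nu inj unfolding I'_def by (auto dest: inj_onD)
  have zh: "z \<noteq> a h" if "h \<in> I'" for h using that z unfolding I'_def by auto
  have znu: "z \<noteq> a \<nu>" using z nu by auto
  define t where "t = (\<lambda>h. 1 / (a h - a \<nu>))"
  define w where "w = 1 / (z - a \<nu>)"
  define y where "y = (\<lambda>h. 1 / (z - a h))"
  define pp where "pp = (\<lambda>j. \<Sum>h\<in>I'. t h ^ j)"
  define g where "g = (\<lambda>x. - (\<Sum>s<K. q s * x ^ (K - s)))"
  have newton: "of_nat r * q r = of_nat K * (\<Sum>j=1..r. pp j * q (r - j))" for r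
  proof -
    have "of_nat r * q r = of_nat K * (\<Sum>j=1..r. (\<Sum>h\<in>I'. (- 1 / (a \<nu> - a h)) ^ j) * q (r - j))"
      unfolding q_def pf_def by (intro newton_q fin) (metis ahnu right_minus_eq)
    also have "(\<lambda>j. \<Sum>h\<in>I'. (- 1 / (a \<nu> - a h)) ^ j) = pp"
    proof -
      have "- 1 / (x - y) = 1 / (y - x)" for x y :: complex by (cases "x = y") (simp_all add: field_simps)
      then show ?thesis unfolding pp_def t_def by simp
    qed
    finally show ?thesis .
  qed
  have yeq: "y h * (t h - w) = t h * w" if "h \<in> I'" for h
    using ahnu[OF that] zh[OF that] znu unfolding y_def t_def w_def by (simp add: field_simps)
  have main: "- (\<Sum>r\<le>K. of_nat r * q r * w ^ (K - r + 1)) = of_nat K * (\<Sum>h\<in>I'. y h * (g (t h) - g w))"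
    unfolding g_def by (rule main_alg[OF fin newton pp_def[THEN fun_cong] yeq])
  have Gcg: "Gc x = g (1 / (x - a \<nu>))" for x unfolding Gc_def g_def by simp
  have A: "Gd + of_nat K * w * Gc z = - (\<Sum>s<K. of_nat s * q s * w ^ (K - s + 1))"
  proof -
    have "Gd + of_nat K * w * Gc z = (\<Sum>s<K. of_nat (K - s) * q s * w ^ (K - s + 1) - of_nat K * (q s * w ^ (K - s + 1)))"
      unfolding Gd_def Gc_def w_def by (simp add: sum_subtractf sum_distrib_left mult_ac)
    also have "\<dots> = (\<Sum>s<K. - (of_nat s * q s * w ^ (K - s + 1)))"
      by (intro sum.cong refl) (simp add: of_nat_diff algebra_simps)
    finally show ?thesis by (simp add: sum_negf)
  qed
  have B: "(\<Sum>r\<le>K. of_nat r * q r * w ^ (K - r + 1)) = (\<Sum>s<K. of_nat s * q s * w ^ (K - s + 1)) + of_nat K * q K * w"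
    by (simp add: lessThan_Suc_atMost[symmetric])
  have C: "(\<Sum>i\<in>{1..N}. 1 / (z - a i)) = w + (\<Sum>h\<in>I'. y h)"
    unfolding ins using fin nI by (simp add: w_def y_def)
  have D: "(\<Sum>h\<in>I'. Gc (a h) / (z - a h)) = (\<Sum>h\<in>I'. y h * g (t h))"
    unfolding Gcg y_def t_def by (simp add: field_simps)
  have "Gd + of_nat K * (\<Sum>i\<in>{1..N}. 1 / (z - a i)) * Gc z
      = (Gd + of_nat K * w * Gc z) + of_nat K * (\<Sum>h\<in>I'. y h) * g w"
    unfolding C by (simp add: Gcg w_def algebra_simps)
  also have "\<dots> = of_nat K * (\<Sum>h\<in>I'. y h * g (t h)) + of_nat K * q K * w"
    using main unfolding A B by (simp add: sum_subtractf sum_distrib_left sum_distrib_right algebra_simps)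
  also have "\<dots> = of_nat K * ((\<Sum>h\<in>I'. Gc (a h) / (z - a h)) + q K / (z - a \<nu>))"
    unfolding D w_def by (simp add: algebra_simps)
  finally show ?thesis .
qed



definition Wt :: "nat set \<Rightarrow> (nat \<Rightarrow> complex) \<Rightarrow> nat multiset \<Rightarrow> complex" where
  "Wt A S q = (\<Prod>x\<in>A. S x ^ count q x / fact (count q x))"

definition Ep :: "(nat \<Rightarrow> complex) \<Rightarrow> nat \<Rightarrow> complex" where
  "Ep S d = (\<Sum>q\<in>partitions d. Wt {1..d} S q)"

lemma sum_mset_count:
  fixes q :: "nat multiset"
  assumes "finite A" "set_mset q \<subseteq> A"
  shows "sum_mset q = (\<Sum>x\<in>A. x * count q x)"
  using assms(2)
proof (induction q)
  case empty then show ?case by simp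
next
  case (add x q)
  then have xA: "x \<in> A" and sub: "set_mset q \<subseteq> A" by auto
  have "(\<Sum>y\<in>A. y * count (add_mset x q) y) = (\<Sum>y\<in>A. y * count q y + (if y = x then x else 0))"
    by (intro sum.cong refl) auto
  also have "\<dots> = (\<Sum>y\<in>A. y * count q y) + x"
    using xA assms(1) by (simp add: sum.distrib)
  finally show ?case using add.IH[OF sub] by simp
qed

lemma partitions_elem:
  assumes "q \<in> partitions d" "x \<in># q"
  shows "x \<in> {1..d}"
proof -
  have "0 < x" using assms unfolding partitions_def by auto
  moreover have "x \<le> sum_mset q"
  proof -
    obtain r where "q = add_mset x r" using assms(2) by (blast dest: multi_member_split)
    then show ?thesis by simp
  qed
  ultimately show ?thesis using assms unfolding partitions_def by auto
qed

lemma finite_partitions: "finite (partitions d)"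
proof -
  have "partitions d \<subseteq> (\<Union>n\<le>d. multisets_of_size {1..d} n)"
  proof
    fix q assume q: "q \<in> partitions d"
    have "set_mset q \<subseteq> {1..d}" using partitions_elem[OF q] by auto
    moreover have "size q \<le> sum_mset q"
    proof -
      have "(\<forall>x\<in>#q'. 0 < x) \<Longrightarrow> size q' \<le> sum_mset q'" for q' :: "nat multiset"
        by (induction q') auto
      then show ?thesis using q unfolding partitions_def by auto
    qed
    ultimately show "q \<in> (\<Union>n\<le>d. multisets_of_size {1..d} n)"
      using q unfolding partitions_def multisets_of_size_def by auto
  qed
  then show ?thesis by (rule finite_subset) auto
qed

lemma Wt_mono:
  assumes "finite B" "A \<subseteq> B" "set_mset q \<subseteq> A"
  shows "Wt A S q = Wt B S q"
proof -
  have "count q i = 0" if "i \<notin> A" for i using that assms(3) by (auto simp: count_eq_zero_iff)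
  then show ?thesis unfolding Wt_def using assms by (intro prod.mono_neutral_left) auto
qed

lemma Wt_remove:
  assumes "finite A" "x \<in> A" "x \<in># q"
  shows "of_nat (count q x) * Wt A S q = S x * Wt A S (q - {#x#})"
proof -
  have "count q x \<noteq> 0" using assms(3) by (simp add: count_eq_zero_iff)
  then obtain c where c: "count q x = Suc c" by (cases "count q x") auto
  have rest: "(\<Prod>y\<in>A - {x}. S y ^ count q y / fact (count q y))
      = (\<Prod>y\<in>A - {x}. S y ^ count (q - {#x#}) y / fact (count (q - {#x#}) y))"
    by (intro prod.cong refl) auto
  have cx: "count (q - {#x#}) x = c" using c by simp
  have "of_nat (count q x) * Wt A S q = of_nat (Suc c) * (S x ^ Suc c / fact (Suc c)) * (\<Prod>y\<in>A - {x}. S y ^ count q y / fact (count q y))"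
    unfolding Wt_def using assms c by (simp add: prod.remove mult.assoc)
  also have "of_nat (Suc c) * (S x ^ Suc c / fact (Suc c)) = S x * (S x ^ c / fact c)"
    by (simp add: fact_Suc field_simps del: of_nat_Suc)
  finally show ?thesis
    unfolding Wt_def rest using assms cx by (simp add: prod.remove mult.assoc)
qed

lemma size_le_sum_mset: "(\<forall>x\<in>#q'. 0 < x) \<Longrightarrow> size q' \<le> sum_mset (q' :: nat multiset)"
  by (induction q') auto

lemma partitions_0: "partitions 0 = {{#}}"
proof (rule set_eqI, rule iffI)
  fix q assume "q \<in> partitions 0"
  then have "\<forall>x\<in>#q. 0 < x" "sum_mset q = 0" unfolding partitions_def by auto
  then have "size q = 0" using size_le_sum_mset[of q] by linarith
  then show "q \<in> {{#}}" by simp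
next
  fix q :: "nat multiset" assume "q \<in> {{#}}" then show "q \<in> partitions 0" unfolding partitions_def by simp
qed

lemma Ep_0: "Ep S 0 = 1"
  unfolding Ep_def partitions_0 Wt_def by simp

lemma Ep_rec: "of_nat d * Ep S d = (\<Sum>j=1..d. of_nat j * S j * Ep S (d - j))"
proof -
  have "of_nat d * Ep S d = (\<Sum>q\<in>partitions d. \<Sum>x\<in>set_mset q. of_nat x * (of_nat (count q x) * Wt {1..d} S q))"
  proof -
    have "of_nat d * Wt {1..d} S q = (\<Sum>x\<in>set_mset q. of_nat x * (of_nat (count q x) * Wt {1..d} S q))"
      if "q \<in> partitions d" for q
    proof -
      have "d = (\<Sum>x\<in>set_mset q. x * count q x)"
        using that sum_mset_count[of "set_mset q" q] unfolding partitions_def by simp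
      then have "(of_nat d :: complex) = (\<Sum>x\<in>set_mset q. of_nat x * of_nat (count q x))" by simp
      then show ?thesis by (simp add: sum_distrib_right mult.assoc)
    qed
    then show ?thesis unfolding Ep_def sum_distrib_left by (intro sum.cong refl) auto
  qed
  also have "\<dots> = (\<Sum>q\<in>partitions d. \<Sum>x\<in>set_mset q. of_nat x * S x * Wt {1..d} S (q - {#x#}))"
  proof (intro sum.cong refl)
    fix q x assume q: "q \<in> partitions d" and x: "x \<in> set_mset q"
    show "of_nat x * (of_nat (count q x) * Wt {1..d} S q) = of_nat x * S x * Wt {1..d} S (q - {#x#})"
      using Wt_remove[where S=S, OF finite_atLeastAtMost partitions_elem[OF q] ] x by (simp add: mult.assoc)
  qed
  also have "\<dots> = (\<Sum>(q, x)\<in>(SIGMA q:partitions d. set_mset q). of_nat x * S x * Wt {1..d} S (q - {#x#}))"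
    by (rule sum.Sigma) (auto simp: finite_partitions)
  also have "\<dots> = (\<Sum>(j, q')\<in>(SIGMA j:{1..d}. partitions (d - j)). of_nat j * S j * Wt {1..d} S q')"
  proof (rule sum.reindex_bij_witness[of _ "\<lambda>(j, q'). (q' + {#j#}, j)" "\<lambda>(q, x). (x, q - {#x#})"])
    fix a assume a: "a \<in> (SIGMA q:partitions d. set_mset q)"
    then obtain q x where aa: "a = (q, x)" and q: "q \<in> partitions d" and x: "x \<in># q" by auto
    have "sum_mset q = x + sum_mset (q - {#x#})"
    proof -
      obtain r where "q = add_mset x r" using x by (blast dest: multi_member_split)
      then show ?thesis by simp
    qed
    then show "(\<lambda>(x, q'). (q' + {#x#}, x)) ((\<lambda>(q, x). (x, q - {#x#})) a) = a"
      and "(\<lambda>(q, x). (x, q - {#x#})) a \<in> (SIGMA j:{1..d}. partitions (d - j))"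
      using aa q x partitions_elem[OF q x] unfolding partitions_def by (auto dest: in_diffD)
    show "(case (\<lambda>(q, x). (x, q - {#x#})) a of (j, q') \<Rightarrow> of_nat j * S j * Wt {1..d} S q') =
          (case a of (q, x) \<Rightarrow> of_nat x * S x * Wt {1..d} S (q - {#x#}))"
      using aa by simp
  next
    fix b assume b: "b \<in> (SIGMA j:{1..d}. partitions (d - j))"
    then obtain j q' where bb: "b = (j, q')" and j: "j \<in> {1..d}" and q': "q' \<in> partitions (d - j)" by auto
    show "(\<lambda>(q, x). (x, q - {#x#})) ((\<lambda>(j, q'). (q' + {#j#}, j)) b) = b" using bb by simp
    show "(\<lambda>(j, q'). (q' + {#j#}, j)) b \<in> (SIGMA q:partitions d. set_mset q)"
      using bb j q' unfolding partitions_def by auto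
  qed
  also have "\<dots> = (\<Sum>j=1..d. \<Sum>q'\<in>partitions (d - j). of_nat j * S j * Wt {1..d} S q')"
    by (rule sum.Sigma[symmetric]) (auto simp: finite_partitions)
  also have "\<dots> = (\<Sum>j=1..d. of_nat j * S j * Ep S (d - j))"
    unfolding Ep_def sum_distrib_left
  proof (intro sum.cong refl)
    fix j q' assume "j \<in> {1..d}" "q' \<in> partitions (d - j)"
    then show "of_nat j * S j * Wt {1..d} S q' = of_nat j * S j * Wt {1..d - j} S q'"
      using partitions_elem[of q' "d - j"] by (subst Wt_mono[of "{1..d}" "{1..d - j}"]) auto
  qed
  finally show ?thesis .
qed



lemma tri_swap:
  fixes f :: "nat \<Rightarrow> nat \<Rightarrow> 'a::comm_monoid_add"
  shows "(\<Sum>j=1..d. \<Sum>i=1..d-j. f j i) = (\<Sum>i=1..d. \<Sum>j=1..d-i. f j i)"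
proof -
  have e1: "{i. i \<in> {1..d} \<and> i + j \<le> d} = {1..d-j}" for j by auto
  have e2: "{j. j \<in> {1..d} \<and> i + j \<le> d} = {1..d-i}" for i by auto
  show ?thesis using sum.swap_restrict[of "{1..d}" "{1..d}" f "\<lambda>j i. i + j \<le> d"] unfolding e1 e2 by simp
qed

lemma Ep_deriv:
  fixes S :: "nat \<Rightarrow> complex \<Rightarrow> complex" and Sd :: "nat \<Rightarrow> complex" and z :: complex
  assumes SD: "\<And>j. j \<ge> 1 \<Longrightarrow> (S j has_field_derivative Sd j) (at z)"
  defines "Ed \<equiv> \<lambda>d. \<Sum>j=1..d. Sd j * Ep (\<lambda>j. S j z) (d - j)"
  shows "((\<lambda>w. Ep (\<lambda>j. S j w) d) has_field_derivative Ed d) (at z)"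
proof (induction d rule: less_induct)
  case (less d)
  show ?case
  proof (cases "d = 0")
    case True
    then show ?thesis unfolding Ed_def by (simp add: Ep_0)
  next
    case False
    define E where "E = (\<lambda>k. Ep (\<lambda>j. S j z) k)"
    have feq: "(\<lambda>w. Ep (\<lambda>j. S j w) d) = (\<lambda>w. (1 / of_nat d) * (\<Sum>j=1..d. of_nat j * S j w * Ep (\<lambda>j. S j w) (d - j)))"
    proof
      fix w
      have "of_nat d * Ep (\<lambda>j. S j w) d = (\<Sum>j=1..d. of_nat j * S j w * Ep (\<lambda>j. S j w) (d - j))"
        by (rule Ep_rec)
      then show "Ep (\<lambda>j. S j w) d = (1 / of_nat d) * (\<Sum>j=1..d. of_nat j * S j w * Ep (\<lambda>j. S j w) (d - j))"
        using False by (simp add: field_simps)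
    qed
    have D: "((\<lambda>w. (1 / of_nat d) * (\<Sum>j=1..d. of_nat j * S j w * Ep (\<lambda>j. S j w) (d - j))) has_field_derivative
        (1 / of_nat d) * (\<Sum>j=1..d. of_nat j * (Sd j * E (d - j) + S j z * Ed (d - j)))) (at z)"
    proof (intro DERIV_cmult DERIV_sum)
      fix j assume j: "j \<in> {1..d}"
      have "((\<lambda>w. of_nat j * S j w * Ep (\<lambda>j. S j w) (d - j)) has_field_derivative
          of_nat j * Sd j * E (d - j) + of_nat j * S j z * Ed (d - j)) (at z)"
        using SD[of j] less.IH[of "d - j"] j False unfolding E_def
        by (auto intro!: derivative_eq_intros)
      then show "((\<lambda>w. of_nat j * S j w * Ep (\<lambda>j. S j w) (d - j)) has_field_derivative
          of_nat j * (Sd j * E (d - j) + S j z * Ed (d - j))) (at z)"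
        by (simp add: algebra_simps)
    qed
    have key: "(\<Sum>j=1..d. of_nat j * (Sd j * E (d - j) + S j z * Ed (d - j))) = of_nat d * Ed d"
    proof -
      have a: "(\<Sum>j=1..d. of_nat j * S j z * Ed (d - j)) = (\<Sum>j=1..d. \<Sum>i=1..d-j. of_nat j * S j z * Sd i * E (d - j - i))"
        unfolding Ed_def E_def by (simp add: sum_distrib_left mult.assoc)
      have b: "(\<Sum>j=1..d. of_nat (d - j) * Sd j * E (d - j)) = (\<Sum>j=1..d. \<Sum>i=1..d-j. of_nat i * S i z * Sd j * E (d - j - i))"
      proof (intro sum.cong refl)
        fix j
        have "of_nat (d - j) * E (d - j) = (\<Sum>i=1..d-j. of_nat i * S i z * E (d - j - i))"
          unfolding E_def by (rule Ep_rec)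
        then show "of_nat (d - j) * Sd j * E (d - j) = (\<Sum>i=1..d-j. of_nat i * S i z * Sd j * E (d - j - i))"
          by (simp add: sum_distrib_left sum_distrib_right mult_ac)
      qed
      have c: "(\<Sum>j=1..d. \<Sum>i=1..d-j. of_nat j * S j z * Sd i * E (d - j - i))
             = (\<Sum>j=1..d. \<Sum>i=1..d-j. of_nat i * S i z * Sd j * E (d - j - i))"
        by (subst tri_swap) (simp add: add.commute)
      have "of_nat d * Ed d = (\<Sum>j=1..d. of_nat j * Sd j * E (d - j)) + (\<Sum>j=1..d. of_nat (d - j) * Sd j * E (d - j))"
        unfolding Ed_def E_def sum_distrib_left sum.distrib[symmetric]
        by (intro sum.cong refl) (simp add: of_nat_diff algebra_simps)
      also have "\<dots> = (\<Sum>j=1..d. of_nat j * Sd j * E (d - j)) + (\<Sum>j=1..d. of_nat j * S j z * Ed (d - j))"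
        unfolding a b c ..
      finally show ?thesis by (simp add: sum.distrib algebra_simps)
    qed
    show ?thesis unfolding feq using D key False by (simp add: field_simps)
  qed
qed



definition Gfun :: "int \<Rightarrow> nat \<Rightarrow> nat \<Rightarrow> (nat \<Rightarrow> complex) \<Rightarrow> nat \<Rightarrow> nat \<Rightarrow> complex \<Rightarrow> complex" where
  "Gfun n m N a j \<nu> w = (\<Sum>k\<in>comps {1..N} (Jnm n m j - 1).
           (-1) ^ (k \<nu>) / (a \<nu> - w) ^ (k \<nu> + 1) * prodfac n m N a j \<nu> k)"

lemma Sfun_Gfun: "Sfun n m N a c j w = (if m dvd j then
        - (of_nat m ^ 2) / (of_nat j * of_int n) * (\<Sum>\<nu>=1..N. c j \<nu> * Gfun n m N a j \<nu> w) else 0)"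
  unfolding Sfun_def Gfun_def by simp

lemma rho_Gfun: "rho n m N a j \<nu> i = (if i \<noteq> \<nu> then of_nat m * Gfun n m N a j \<nu> (a i)
      else of_nat m * (\<Sum>k\<in>comps ({1..N} - {\<nu>}) (Jnm n m j). prodfac n m N a j \<nu> k))"
  unfolding rho_def Gfun_def by simp

lemma Gfun_facts:
  fixes a :: "nat \<Rightarrow> complex" and z :: complex
  assumes nu: "\<nu> \<in> {1..N}" and K: "Jnm n m j \<ge> 1" and inj: "inj_on a {1..N}"
    and z: "\<forall>i\<in>{1..N}. z \<noteq> a i"
  shows "\<exists>Gd. (Gfun n m N a j \<nu> has_field_derivative Gd) (at z) \<and>
     Gd + of_nat (Jnm n m j) * (\<Sum>i\<in>{1..N}. 1 / (z - a i)) * Gfun n m N a j \<nu> z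
       = of_nat (Jnm n m j) * ((\<Sum>h\<in>{1..N} - {\<nu>}. Gfun n m N a j \<nu> (a h) / (z - a h))
           + (\<Sum>k\<in>comps ({1..N} - {\<nu>}) (Jnm n m j). prodfac n m N a j \<nu> k) / (z - a \<nu>))"
proof -
  define KK where "KK = Jnm n m j"
  define I' where "I' = {1..N} - {\<nu>}"
  define pf where "pf = (\<lambda>k. \<Prod>h\<in>I'. ecoef KK (a \<nu> - a h) (k h))"
  define q where "q = (\<lambda>s. \<Sum>k\<in>comps I' s. pf k)"
  define Gc where "Gc = (\<lambda>w. - (\<Sum>s<KK. q s * (1 / (w - a \<nu>)) ^ (KK - s)))"
  define Gd where "Gd = (\<Sum>s<KK. of_nat (KK - s) * q s * (1 / (z - a \<nu>)) ^ (KK - s + 1))"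
  have pfeq: "prodfac n m N a j \<nu> = pf"
    unfolding prodfac_def pf_def ecoef_def I'_def KK_def by (intro ext prod.cong refl)
  have GG: "Gfun n m N a j \<nu> = Gc"
  proof
    fix w
    show "Gfun n m N a j \<nu> w = Gc w"
      unfolding Gfun_def pfeq Gc_def q_def pf_def I'_def KK_def
      using G_closed[OF nu K[folded KK_def], of a w] unfolding KK_def by simp
  qed
  have znu: "z \<noteq> a \<nu>" using z nu by auto
  have "(Gc has_field_derivative Gd) (at z)"
    unfolding Gc_def Gd_def by (rule G_deriv[OF znu])
  moreover have "Gd + of_nat KK * (\<Sum>i\<in>{1..N}. 1 / (z - a i)) * Gc z
       = of_nat KK * ((\<Sum>h\<in>I'. Gc (a h) / (z - a h)) + q KK / (z - a \<nu>))"
    unfolding Gd_def Gc_def q_def pf_def I'_def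
    by (rule G_ident[OF nu K[folded KK_def] inj z])
  ultimately show ?thesis unfolding GG pfeq KK_def[symmetric] I'_def[symmetric] q_def by blast
qed


lemma Jnm_eq:
  assumes "n < 0" "m \<ge> 1" "m dvd j" "j \<ge> 1"
  shows "Jnm n m j \<ge> 1" "(of_nat (Jnm n m j) :: complex) = - (of_nat j * of_int n / of_nat m)"
proof -
  obtain t where t: "j = m * t" using assms(3) by auto
  have t1: "t \<ge> 1" using t assms by (cases t) auto
  have J: "Jnm n m j = t * nat \<bar>n\<bar>" unfolding Jnm_def t using assms(2) by simp
  show "Jnm n m j \<ge> 1" unfolding J using t1 assms(1) by simp
  have "(of_nat (t * nat \<bar>n\<bar>) :: complex) = of_nat t * of_int (- n)"
    using assms(1) by (simp add: of_nat_mult)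
  also have "\<dots> = - (of_nat j * of_int n / of_nat m)" unfolding t using assms(2) by (simp add: field_simps)
  finally show "(of_nat (Jnm n m j) :: complex) = - (of_nat j * of_int n / of_nat m)" unfolding J .
qed

lemma Sj_facts:
  fixes a :: "nat \<Rightarrow> complex" and z :: complex
  assumes n: "n < 0" and m: "m \<ge> 1" and j: "j \<ge> 1" and inj: "inj_on a {1..N}"
    and z: "\<forall>i\<in>{1..N}. z \<noteq> a i"
  shows "\<exists>Sd. (Sfun n m N a c j has_field_derivative Sd) (at z) \<and>
     Sd + (- (of_nat j * of_int n / of_nat m)) * (\<Sum>i\<in>{1..N}. 1 / (z - a i)) * Sfun n m N a c j z
       = (\<Sum>i\<in>{1..N}. (if m dvd j then \<Sum>\<nu>=1..N. c j \<nu> * rho n m N a j \<nu> i else 0) / (z - a i))"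
proof (cases "m dvd j")
  case False
  then have "Sfun n m N a c j = (\<lambda>w. 0)" by (simp add: Sfun_Gfun fun_eq_iff)
  then show ?thesis using False by auto
next
  case True
  define K where "K = Jnm n m j"
  have K1: "K \<ge> 1" and Keq: "(of_nat K :: complex) = - (of_nat j * of_int n / of_nat m)"
    using Jnm_eq[OF n m True j] unfolding K_def by auto
  define \<sigma> where "\<sigma> = (\<Sum>i\<in>{1..N}. 1 / (z - a i))"
  define X where "X = (\<lambda>\<nu>. (\<Sum>h\<in>{1..N} - {\<nu>}. Gfun n m N a j \<nu> (a h) / (z - a h))
           + (\<Sum>k\<in>comps ({1..N} - {\<nu>}) K. prodfac n m N a j \<nu> k) / (z - a \<nu>))"
  have "\<forall>\<nu>\<in>{1..N}. \<exists>Gd. (Gfun n m N a j \<nu> has_field_derivative Gd) (at z) \<and>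
     Gd + of_nat K * \<sigma> * Gfun n m N a j \<nu> z = of_nat K * X \<nu>"
    using Gfun_facts[OF _ K1[unfolded K_def] inj z] unfolding K_def \<sigma>_def X_def by blast
  then obtain Gd where Gd: "\<And>\<nu>. \<nu> \<in> {1..N} \<Longrightarrow> (Gfun n m N a j \<nu> has_field_derivative Gd \<nu>) (at z)"
    and Gid: "\<And>\<nu>. \<nu> \<in> {1..N} \<Longrightarrow> Gd \<nu> + of_nat K * \<sigma> * Gfun n m N a j \<nu> z = of_nat K * X \<nu>"
    by metis
  define C where "C = - (of_nat m ^ 2) / (of_nat j * of_int n :: complex)"
  have Sf: "Sfun n m N a c j = (\<lambda>w. C * (\<Sum>\<nu>=1..N. c j \<nu> * Gfun n m N a j \<nu> w))"
    using True by (simp add: Sfun_Gfun fun_eq_iff C_def)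
  have D: "(Sfun n m N a c j has_field_derivative C * (\<Sum>\<nu>=1..N. c j \<nu> * Gd \<nu>)) (at z)"
    unfolding Sf by (intro DERIV_cmult DERIV_sum Gd) auto
  have CK: "C * of_nat K = of_nat m"
    unfolding Keq C_def using n m j by (simp add: field_simps power2_eq_square)
  have rhoX: "(\<Sum>i\<in>{1..N}. rho n m N a j \<nu> i / (z - a i)) = of_nat m * X \<nu>" if nu: "\<nu> \<in> {1..N}" for \<nu>
  proof -
    have ins: "{1..N} = insert \<nu> ({1..N} - {\<nu>})" using nu by auto
    have "(\<Sum>i\<in>{1..N}. rho n m N a j \<nu> i / (z - a i)) = rho n m N a j \<nu> \<nu> / (z - a \<nu>) + (\<Sum>i\<in>{1..N} - {\<nu>}. rho n m N a j \<nu> i / (z - a i))"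
      by (rule sum.remove[OF finite_atLeastAtMost nu])
    also have "(\<Sum>i\<in>{1..N} - {\<nu>}. rho n m N a j \<nu> i / (z - a i)) = of_nat m * (\<Sum>h\<in>{1..N} - {\<nu>}. Gfun n m N a j \<nu> (a h) / (z - a h))"
      by (simp add: rho_Gfun sum_distrib_left)
    finally show ?thesis unfolding X_def by (simp add: rho_Gfun K_def algebra_simps)
  qed
  have "C * (\<Sum>\<nu>=1..N. c j \<nu> * Gd \<nu>) + of_nat K * \<sigma> * Sfun n m N a c j z
      = (\<Sum>\<nu>=1..N. c j \<nu> * C * (Gd \<nu> + of_nat K * \<sigma> * Gfun n m N a j \<nu> z))"
    unfolding Sf by (simp add: sum_distrib_left sum.distrib algebra_simps)
  also have "\<dots> = (\<Sum>\<nu>=1..N. c j \<nu> * (C * of_nat K) * X \<nu>)"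
    by (intro sum.cong refl) (simp add: Gid)
  also have "\<dots> = (\<Sum>\<nu>=1..N. c j \<nu> * (\<Sum>i\<in>{1..N}. rho n m N a j \<nu> i / (z - a i)))"
    unfolding CK by (intro sum.cong refl) (simp add: rhoX[symmetric] del: atLeastAtMost_iff)
  also have "\<dots> = (\<Sum>i\<in>{1..N}. (\<Sum>\<nu>=1..N. c j \<nu> * rho n m N a j \<nu> i) / (z - a i))"
    by (simp add: sum_distrib_left sum_divide_distrib mult_ac) (rule sum.swap)
  finally show ?thesis using D True unfolding \<sigma>_def Keq by auto
qed



lemma L_deriv:
  fixes L :: "complex \<Rightarrow> complex"
  assumes "L holomorphic_on U" "open U" "z \<in> U" "\<forall>w\<in>U. exp (L w) = w - a0"
  shows "(L has_field_derivative 1 / (z - a0)) (at z)"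
proof -
  obtain L' where L': "(L has_field_derivative L') (at z)"
    using assms(1,2,3) holomorphic_on_open by blast
  have "((\<lambda>w. exp (L w)) has_field_derivative exp (L z) * L') (at z)"
    using L' by (auto intro!: derivative_eq_intros)
  then have "((\<lambda>w. w - a0) has_field_derivative exp (L z) * L') (at z)"
    by (rule has_field_derivative_transform_within_open[OF _ assms(2,3)]) (use assms(4) in auto)
  moreover have "((\<lambda>w. w - a0) has_field_derivative 1) (at z)"
    by (auto intro!: derivative_eq_intros)
  ultimately have "exp (L z) * L' = 1" by (rule DERIV_unique)
  moreover have ez: "exp (L z) = z - a0" using assms(3,4) by auto
  moreover have nz: "z - a0 \<noteq> 0" using ez exp_not_eq_zero by metis
  ultimately have "L' = 1 / (z - a0)" by (simp add: field_simps)
  then show ?thesis using L' by simp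
qed

lemma D_deriv:
  fixes L :: "nat \<Rightarrow> complex \<Rightarrow> complex" and bb :: "nat \<Rightarrow> complex"
  assumes "\<And>i. i \<in> {1..N} \<Longrightarrow> (L i has_field_derivative 1 / (z - a i)) (at z)"
  shows "((\<lambda>w. \<Prod>i=1..N. exp (bb i * L i w)) has_field_derivative
           (\<Prod>i=1..N. exp (bb i * L i z)) * (\<Sum>i=1..N. bb i / (z - a i))) (at z)"
proof -
  have eq: "(\<lambda>w. \<Prod>i=1..N. exp (bb i * L i w)) = (\<lambda>w. exp (\<Sum>i=1..N. bb i * L i w))"
    by (simp add: exp_sum)
  have "((\<lambda>w. exp (\<Sum>i=1..N. bb i * L i w)) has_field_derivative
           exp (\<Sum>i=1..N. bb i * L i z) * (\<Sum>i=1..N. bb i * (1 / (z - a i)))) (at z)"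
    by (intro DERIV_chain2[OF DERIV_exp] DERIV_sum DERIV_cmult assms) auto
  then show ?thesis unfolding eq by (simp add: exp_sum)
qed

lemma Mmat_Ep: "Mmat n m N a c k l w = (if k \<le> l then Ep (\<lambda>j. Sfun n m N a c j w) (l - k) else 0)"
  unfolding Mmat_def Ep_def Wt_def by (auto simp: partitions_0)

lemma Phi_eq:
  assumes "l \<in> {1..p}"
  shows "Phi n p m N a \<theta> c L k l w = Mmat n m N a c k l w * Dmat n m N \<theta> L l l w"
proof -
  have "Phi n p m N a \<theta> c L k l w = (\<Sum>r\<in>{1..p}. if r = l then Mmat n m N a c k l w * Dmat n m N \<theta> L l l w else 0)"
    unfolding Phi_def by (intro sum.cong refl) (auto simp: Dmat_def)
  also have "\<dots> = Mmat n m N a c k l w * Dmat n m N \<theta> L l l w" using assms by simp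
  finally show ?thesis .
qed

lemma B_sum:
  assumes kl: "k \<le> l" "k \<ge> 1" "l \<le> p"
  shows "(\<Sum>r=1..p. Bmat n m N a \<theta> c i k r * Mmat n m N a c r l z)
     = beta n m \<theta> i k * Ep (\<lambda>j. Sfun n m N a c j z) (l - k)
       + (\<Sum>j=1..l-k. (if m dvd j then \<Sum>\<nu>=1..N. c j \<nu> * rho n m N a j \<nu> i else 0) * Ep (\<lambda>j. Sfun n m N a c j z) (l - k - j))"
proof -
  define f where "f = (\<lambda>r. Bmat n m N a \<theta> c i k r * Mmat n m N a c r l z)"
  have "(\<Sum>r=1..p. f r) = (\<Sum>r=k..l. f r)"
  proof (rule sum.mono_neutral_right)
    show "\<forall>r\<in>{1..p} - {k..l}. f r = 0"
      unfolding f_def by (auto simp: Bmat_def Mmat_def)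
  qed (use kl in auto)
  also have "\<dots> = f k + (\<Sum>r=Suc k..l. f r)"
    using kl by (simp add: sum.atLeast_Suc_atMost)
  also have "(\<Sum>r=Suc k..l. f r) = (\<Sum>j=1..l-k. f (j + k))"
    using sum.shift_bounds_cl_nat_ivl[of f 1 k "l - k"] kl by simp
  also have "(\<Sum>j=1..l-k. f (j + k)) = (\<Sum>j=1..l-k. (if m dvd j then \<Sum>\<nu>=1..N. c j \<nu> * rho n m N a j \<nu> i else 0) * Ep (\<lambda>j. Sfun n m N a c j z) (l - k - j))"
    unfolding f_def by (intro sum.cong refl) (auto simp: Bmat_def Mmat_Ep add.commute)
  also have "f k = beta n m \<theta> i k * Ep (\<lambda>j. Sfun n m N a c j z) (l - k)"
    unfolding f_def using kl by (simp add: Bmat_def Mmat_Ep)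
  finally show ?thesis unfolding f_def .
qed



theorem corollary2:
  fixes n :: int and p m N :: nat
    and a \<theta> :: "nat \<Rightarrow> complex" and c :: "nat \<Rightarrow> nat \<Rightarrow> complex"
    and U :: "complex set" and L :: "nat \<Rightarrow> complex \<Rightarrow> complex"
  assumes "n < 0" and "p \<ge> 1" and "m \<ge> 1" and "N \<ge> 1"
    and "gcd n (int m) = 1"
    and "inj_on a {1..N}"
    and "open U" and "\<forall>i\<in>{1..N}. a i \<notin> U"
    and "\<forall>i\<in>{1..N}. L i holomorphic_on U \<and> (\<forall>z\<in>U. exp (L i z) = z - a i)"
  shows "\<forall>z\<in>U. \<forall>k\<in>{1..p}. \<forall>l\<in>{1..p}.
           ((\<lambda>w. Phi n p m N a \<theta> c L k l w) has_field_derivative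
              (\<Sum>i=1..N. \<Sum>r=1..p. Bmat n m N a \<theta> c i k r / (z - a i) * Phi n p m N a \<theta> c L r l z))
           (at z)"
proof (intro ballI)
  fix z k l assume z: "z \<in> U" and k: "k \<in> {1..p}" and l: "l \<in> {1..p}"
  have zi: "\<forall>i\<in>{1..N}. z \<noteq> a i" using assms(8) z by auto
  have Lder: "(L i has_field_derivative 1 / (z - a i)) (at z)" if "i \<in> {1..N}" for i
    using assms(9) that by (intro L_deriv[OF _ assms(7) z]) auto
  define S where "S = (\<lambda>j w. Sfun n m N a c j w)"
  define Boff where "Boff = (\<lambda>i j. if m dvd j then \<Sum>\<nu>=1..N. c j \<nu> * rho n m N a j \<nu> i else 0)"
  define T where "T = (\<lambda>j. \<Sum>i\<in>{1..N}. Boff i j / (z - a i))"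
  define \<sigma> where "\<sigma> = (\<Sum>i\<in>{1..N}. 1 / (z - a i))"
  have "\<forall>j. \<exists>Sd. j \<ge> 1 \<longrightarrow> ((S j has_field_derivative Sd) (at z) \<and>
      Sd + (- (of_nat j * of_int n / of_nat m)) * \<sigma> * S j z = T j)"
    using Sj_facts[OF assms(1) assms(3) _ assms(6) zi] unfolding S_def T_def \<sigma>_def Boff_def by blast
  then obtain Sd where SD: "\<And>j. j \<ge> 1 \<Longrightarrow> (S j has_field_derivative Sd j) (at z)"
    and Sid: "\<And>j. j \<ge> 1 \<Longrightarrow> Sd j + (- (of_nat j * of_int n / of_nat m)) * \<sigma> * S j z = T j"
    by metis
  define E where "E = (\<lambda>d. Ep (\<lambda>j. S j z) d)"
  define Dl where "Dl = (\<lambda>w. \<Prod>i=1..N. exp (beta n m \<theta> i l * L i w))"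
  have DlD: "(Dl has_field_derivative Dl z * (\<Sum>i=1..N. beta n m \<theta> i l / (z - a i))) (at z)"
    unfolding Dl_def by (rule D_deriv[OF Lder])
  have Dm: "Dmat n m N \<theta> L l l w = Dl w" for w unfolding Dmat_def Dl_def by simp
  have PhiE: "Phi n p m N a \<theta> c L r l w = Mmat n m N a c r l w * Dl w" for r w
    using Phi_eq[OF l] Dm by simp
  show "((\<lambda>w. Phi n p m N a \<theta> c L k l w) has_field_derivative
              (\<Sum>i=1..N. \<Sum>r=1..p. Bmat n m N a \<theta> c i k r / (z - a i) * Phi n p m N a \<theta> c L r l z)) (at z)"
  proof (cases "k \<le> l")
    case False
    then have P0: "(\<lambda>w. Phi n p m N a \<theta> c L k l w) = (\<lambda>w. 0)"
      unfolding PhiE by (simp add: Mmat_def fun_eq_iff)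
    have zero: "Bmat n m N a \<theta> c i k r / (z - a i) * Phi n p m N a \<theta> c L r l z = 0" for i r
      using False unfolding PhiE by (auto simp: Bmat_def Mmat_def)
    have S0: "(\<Sum>i=1..N. \<Sum>r=1..p. Bmat n m N a \<theta> c i k r / (z - a i) * Phi n p m N a \<theta> c L r l z) = 0"
      by (simp only: zero sum.neutral_const)
    show ?thesis unfolding P0 S0 by (rule DERIV_const)
  next
    case True
    define d where "d = l - k"
    have Pf: "(\<lambda>w. Phi n p m N a \<theta> c L k l w) = (\<lambda>w. Ep (\<lambda>j. S j w) d * Dl w)"
      unfolding PhiE Mmat_Ep S_def d_def using True by simp
    have ED: "((\<lambda>w. Ep (\<lambda>j. S j w) d) has_field_derivative (\<Sum>j=1..d. Sd j * E (d - j))) (at z)"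
      unfolding E_def by (rule Ep_deriv[OF SD])
    have PD: "((\<lambda>w. Phi n p m N a \<theta> c L k l w) has_field_derivative
        (\<Sum>j=1..d. Sd j * E (d - j)) * Dl z + E d * (Dl z * (\<Sum>i=1..N. beta n m \<theta> i l / (z - a i)))) (at z)"
      unfolding Pf using DERIV_mult[OF ED DlD] unfolding E_def by (simp add: mult.commute)
    have s1: "(\<Sum>j=1..d. Sd j * E (d - j)) = (\<Sum>j=1..d. T j * E (d - j)) + of_int n / of_nat m * \<sigma> * (of_nat d * E d)"
    proof -
      have "(\<Sum>j=1..d. Sd j * E (d - j)) = (\<Sum>j=1..d. T j * E (d - j) + of_int n / of_nat m * \<sigma> * (of_nat j * S j z * E (d - j)))"
      proof (intro sum.cong refl)
        fix j assume "j \<in> {1..d}"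
        then have "Sd j = T j + of_nat j * of_int n / of_nat m * \<sigma> * S j z" using Sid[of j] by (simp add: algebra_simps)
        then show "Sd j * E (d - j) = T j * E (d - j) + of_int n / of_nat m * \<sigma> * (of_nat j * S j z * E (d - j))"
          by (simp add: algebra_simps)
      qed
      also have "\<dots> = (\<Sum>j=1..d. T j * E (d - j)) + of_int n / of_nat m * \<sigma> * (\<Sum>j=1..d. of_nat j * S j z * E (d - j))"
        by (simp add: sum.distrib sum_distrib_left)
      also have "(\<Sum>j=1..d. of_nat j * S j z * E (d - j)) = of_nat d * E d"
        unfolding E_def by (rule Ep_rec[symmetric])
      finally show ?thesis .
    qed
    have s2: "(\<Sum>i=1..N. beta n m \<theta> i l / (z - a i)) = (\<Sum>i=1..N. beta n m \<theta> i k / (z - a i)) - of_nat d * of_int n / of_nat m * \<sigma>"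
    proof -
      have "beta n m \<theta> i l = beta n m \<theta> i k - of_nat d * of_int n / of_nat m" for i
      proof -
        have "(of_nat (l - 1) :: complex) = of_nat (k - 1) + of_nat d"
          using True k unfolding d_def by (simp add: of_nat_diff)
        then show ?thesis unfolding beta_def by (simp add: algebra_simps add_divide_distrib)
      qed
      then show ?thesis unfolding \<sigma>_def
        by (simp add: sum_subtractf sum_distrib_left diff_divide_distrib)
    qed
    have s3: "(\<Sum>i=1..N. \<Sum>r=1..p. Bmat n m N a \<theta> c i k r / (z - a i) * Phi n p m N a \<theta> c L r l z)
        = Dl z * ((\<Sum>i=1..N. beta n m \<theta> i k / (z - a i)) * E d + (\<Sum>j=1..d. T j * E (d - j)))"
    proof -
      have "(\<Sum>r=1..p. Bmat n m N a \<theta> c i k r / (z - a i) * Phi n p m N a \<theta> c L r l z)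
          = Dl z / (z - a i) * (beta n m \<theta> i k * E d + (\<Sum>j=1..d. Boff i j * E (d - j)))" for i
      proof -
        have "(\<Sum>r=1..p. Bmat n m N a \<theta> c i k r / (z - a i) * Phi n p m N a \<theta> c L r l z)
            = Dl z / (z - a i) * (\<Sum>r=1..p. Bmat n m N a \<theta> c i k r * Mmat n m N a c r l z)"
          unfolding PhiE by (simp add: sum_distrib_left algebra_simps)
        also have "\<dots> = Dl z / (z - a i) * (beta n m \<theta> i k * E d + (\<Sum>j=1..d. Boff i j * E (d - j)))"
          using B_sum[of k l p n m N a \<theta> c i z] True k l unfolding E_def Boff_def d_def S_def by simp
        finally show ?thesis .
      qed
      then have "(\<Sum>i=1..N. \<Sum>r=1..p. Bmat n m N a \<theta> c i k r / (z - a i) * Phi n p m N a \<theta> c L r l z)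
          = (\<Sum>i=1..N. Dl z / (z - a i) * (beta n m \<theta> i k * E d + (\<Sum>j=1..d. Boff i j * E (d - j))))"
        by simp
      also have "\<dots> = Dl z * ((\<Sum>i=1..N. beta n m \<theta> i k / (z - a i)) * E d
                + (\<Sum>i=1..N. \<Sum>j=1..d. Boff i j / (z - a i) * E (d - j)))"
        by (simp add: sum.distrib sum_distrib_left sum_distrib_right algebra_simps)
      also have "(\<Sum>i=1..N. \<Sum>j=1..d. Boff i j / (z - a i) * E (d - j)) = (\<Sum>j=1..d. T j * E (d - j))"
        unfolding T_def by (subst sum.swap) (simp add: sum_distrib_right)
      finally show ?thesis .
    qed
    have "(\<Sum>j=1..d. Sd j * E (d - j)) * Dl z + E d * (Dl z * (\<Sum>i=1..N. beta n m \<theta> i l / (z - a i)))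
        = (\<Sum>i=1..N. \<Sum>r=1..p. Bmat n m N a \<theta> c i k r / (z - a i) * Phi n p m N a \<theta> c L r l z)"
      unfolding s3 s1 s2 by (simp add: algebra_simps)
    then show ?thesis using PD by simp
  qed
qed


end
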